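(* If $H$ is a graph with $\gamma_I(H)=\gamma(H)=3$, then for any graph $G$, $\gamma_I(G\circ H)=\gamma_{(2,2,2,0)}(G)$.
   Context: All graphs are finite and simple; $N(v)$ denotes the open neighbourhood of a vertex $v$. For an integer $l\ge1$ and a vector $w=(w_0,\dots,w_l)$ of nonnegative integers with $w_0\ge 1$, a function $f:V(G)\to\{0,1,\dots,l\}$ is a $w$-dominating function on $G$ if $\sum_{u\in N(v)}f(u)\ge w_i$ for every vertex $v$ with $f(v)=i$ ($i=0,\dots,l$). The weight of $f$ is $\omega(f)=\sum_{v\in V(G)}f(v)$, and $\gamma_w(G)=\gamma_{(w_0,\dots,w_l)}(G)$ is the minimum weight of a $w$-dominating function on $G$. The Italian domination number is $\gamma_I(G)=\gamma_{(2,0,0)}(G)$, i.e., the minimum weight of $f:V(G)\to\{0,1,2\}$ with $\sum_{u\in N(v)}f(u)\ge 2$ for every $v$ with $f(v)=0$. $\gamma(H)$ is the domination number. The lexicographic product $G\circ H$ has vertex set $V(G)\times V(H)$, with $(u,v)(x,y)$ an edge iff $ux\in E(G)$, or $u=x$ and $vy\in E(H)$. *)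

theory Defs
  imports Main
begin

definition graph :: "'a set \<Rightarrow> ('a \<Rightarrow> 'a \<Rightarrow> bool) \<Rightarrow> bool" where
  "graph V E \<longleftrightarrow> finite V \<and> (\<forall>x y. E x y \<longrightarrow> x \<in> V \<and> y \<in> V)
     \<and> (\<forall>x y. E x y \<longrightarrow> E y x) \<and> (\<forall>x. \<not> E x x)"

definition nbhd :: "'a set \<Rightarrow> ('a \<Rightarrow> 'a \<Rightarrow> bool) \<Rightarrow> 'a \<Rightarrow> 'a set" where
  "nbhd V E v = {u \<in> V. E v u}"

definition w_dominating :: "'a set \<Rightarrow> ('a \<Rightarrow> 'a \<Rightarrow> bool) \<Rightarrow> nat list \<Rightarrow> ('a \<Rightarrow> nat) \<Rightarrow> bool" where
  "w_dominating V E w f \<longleftrightarrow>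
     (\<forall>v. v \<notin> V \<longrightarrow> f v = 0) \<and>
     (\<forall>v\<in>V. f v \<le> length w - 1) \<and>
     (\<forall>v\<in>V. (\<Sum>u\<in>nbhd V E v. f u) \<ge> w ! (f v))"

definition gamma_w :: "'a set \<Rightarrow> ('a \<Rightarrow> 'a \<Rightarrow> bool) \<Rightarrow> nat list \<Rightarrow> nat" where
  "gamma_w V E w = Inf {(\<Sum>v\<in>V. f v) | f. w_dominating V E w f}"

definition italian_domination_number :: "'a set \<Rightarrow> ('a \<Rightarrow> 'a \<Rightarrow> bool) \<Rightarrow> nat" where
  "italian_domination_number V E = gamma_w V E [2, 0, 0]"

definition dominating_set :: "'a set \<Rightarrow> ('a \<Rightarrow> 'a \<Rightarrow> bool) \<Rightarrow> 'a set \<Rightarrow> bool" where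
  "dominating_set V E D \<longleftrightarrow> D \<subseteq> V \<and> (\<forall>v\<in>V - D. \<exists>u\<in>D. E v u)"

definition domination_number :: "'a set \<Rightarrow> ('a \<Rightarrow> 'a \<Rightarrow> bool) \<Rightarrow> nat" where
  "domination_number V E = Inf {card D | D. dominating_set V E D}"

definition lex_edge :: "('a \<Rightarrow> 'a \<Rightarrow> bool) \<Rightarrow> ('b \<Rightarrow> 'b \<Rightarrow> bool) \<Rightarrow> 'a \<times> 'b \<Rightarrow> 'a \<times> 'b \<Rightarrow> bool" where
  "lex_edge EG EH p q \<longleftrightarrow> EG (fst p) (fst q) \<or> (fst p = fst q \<and> EH (snd p) (snd q))"

end

theory Submission
  imports Defs
begin

lemma nbhd_lex:
  assumes "graph VG EG" "u \<in> VG"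
  shows "nbhd (VG \<times> VH) (lex_edge EG EH) (u,h) = nbhd VG EG u \<times> VH \<union> {u} \<times> nbhd VH EH h"
  using assms unfolding nbhd_def lex_edge_def graph_def by auto

lemma sum_prod_split:
  "(\<Sum>p\<in>A \<times> B. f p) = (\<Sum>x\<in>A. \<Sum>y\<in>B. f (x,y))"
  using sum.cartesian_product[of "\<lambda>x y. f (x,y)" B A] by simp

lemma sum_nbhd_lex:
  assumes "graph VG EG" "graph VH EH" "u \<in> VG"
  shows "(\<Sum>p\<in>nbhd (VG \<times> VH) (lex_edge EG EH) (u,h). f p)
     = (\<Sum>x\<in>nbhd VG EG u. \<Sum>y\<in>VH. f (x,y)) + (\<Sum>y\<in>nbhd VH EH h. f (u,y))"
proof -
  have fG: "finite VG" and fH: "finite VH" using assms unfolding graph_def by auto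
  have f1: "finite (nbhd VG EG u \<times> VH)" using fG fH unfolding nbhd_def by auto
  have f2: "finite ({u} \<times> nbhd VH EH h)" using fH unfolding nbhd_def by auto
  have dj: "(nbhd VG EG u \<times> VH) \<inter> ({u} \<times> nbhd VH EH h) = {}"
    using assms(1) unfolding nbhd_def graph_def by auto
  have "(\<Sum>p\<in>nbhd (VG \<times> VH) (lex_edge EG EH) (u,h). f p)
     = (\<Sum>p\<in>nbhd VG EG u \<times> VH. f p) + (\<Sum>p\<in>{u} \<times> nbhd VH EH h. f p)"
    unfolding nbhd_lex[OF assms(1,3)] by (rule sum.union_disjoint[OF f1 f2 dj])
  also have "(\<Sum>p\<in>nbhd VG EG u \<times> VH. f p) = (\<Sum>x\<in>nbhd VG EG u. \<Sum>y\<in>VH. f (x,y))"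
    by (rule sum_prod_split)
  also have "(\<Sum>p\<in>{u} \<times> nbhd VH EH h. f p) = (\<Sum>y\<in>nbhd VH EH h. f (u,y))"
    by (simp add: sum_prod_split)
  finally show ?thesis .
qed


theorem theorem3:
  fixes VG :: "'a set" and EG :: "'a \<Rightarrow> 'a \<Rightarrow> bool"
    and VH :: "'b set" and EH :: "'b \<Rightarrow> 'b \<Rightarrow> bool"
  assumes "graph VG EG" and "graph VH EH"
    and "italian_domination_number VH EH = 3"
    and "domination_number VH EH = 3"
  shows "italian_domination_number (VG \<times> VH) (lex_edge EG EH) = gamma_w VG EG [2, 2, 2, 0]"
proof -
  have fG: "finite VG" and fH: "finite VH" using assms(1,2) unfolding graph_def by auto
  define S1 where "S1 = {(\<Sum>v\<in>VG \<times> VH. f v) | f. w_dominating (VG \<times> VH) (lex_edge EG EH) [2,0,0] f}"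
  define S2 where "S2 = {(\<Sum>v\<in>VG. f v) | f. w_dominating VG EG [2,2,2,0] f}"
  define SH where "SH = {(\<Sum>v\<in>VH. f v) | f. w_dominating VH EH [2,0,0] f}"
  have IH: "Inf SH = 3" using assms(3) unfolding SH_def italian_domination_number_def gamma_w_def .
  have DH: "Inf {card D | D. dominating_set VH EH D} = 3"
    using assms(4) unfolding domination_number_def .
  have S2ne: "S2 \<noteq> {}"
  proof -
    define g where "g = (\<lambda>v. if v \<in> VG then 3 else (0::nat))"
    have "w_dominating VG EG [2,2,2,0] g" unfolding w_dominating_def g_def by auto
    thus ?thesis unfolding S2_def by blast
  qed
  have up: "\<exists>a\<in>S1. a \<le> b" if bS: "b \<in> S2" for b
  proof -
    obtain g where gd: "w_dominating VG EG [2,2,2,0] g" and b: "b = (\<Sum>v\<in>VG. g v)"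
      using bS unfolding S2_def by blast
    have "SH \<noteq> {}"
    proof -
      define c where "c = (\<lambda>v. if v \<in> VH then 1 else (0::nat))"
      have "w_dominating VH EH [2,0,0] c" unfolding w_dominating_def c_def by auto
      thus ?thesis unfolding SH_def by blast
    qed
    hence "Inf SH \<in> SH" by (rule Inf_nat_def1)
    hence "3 \<in> SH" using IH by simp
    then obtain \<phi> where \<phi>d: "w_dominating VH EH [2,0,0] \<phi>" and \<phi>w: "(\<Sum>v\<in>VH. \<phi> v) = 3"
      unfolding SH_def by auto
    have "VH \<noteq> {}" using \<phi>w by auto
    then obtain h0 where h0: "h0 \<in> VH" by blast
    define f where "f = (\<lambda>(x,y). if x \<in> VG \<and> y \<in> VH then
        (if g x = 3 then \<phi> y else if y = h0 then g x else 0) else (0::nat))"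
    have row: "(\<Sum>y\<in>VH. f (x,y)) = g x" if "x \<in> VG" for x
    proof (cases "g x = 3")
      case True
      then show ?thesis using that \<phi>w unfolding f_def by simp
    next
      case False
      have "(\<Sum>y\<in>VH. f (x,y)) = (\<Sum>y\<in>VH. if y = h0 then g x else 0)"
        using that False unfolding f_def by (intro sum.cong) auto
      also have "\<dots> = g x" using h0 fH by (simp add: sum.delta)
      finally show ?thesis .
    qed
    have fd: "w_dominating (VG \<times> VH) (lex_edge EG EH) [2,0,0] f"
      unfolding w_dominating_def
    proof (intro conjI ballI allI impI)
      fix v assume "v \<notin> VG \<times> VH" thus "f v = 0" unfolding f_def by (cases v) auto
    next
      fix v assume v: "v \<in> VG \<times> VH"
      obtain u h where uh: "v = (u,h)" by fastforce
      have gu: "g u \<le> 3" using gd v uh unfolding w_dominating_def by auto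
      have ph: "\<phi> h \<le> 2" using \<phi>d v uh unfolding w_dominating_def by auto
      show "f v \<le> length [2::nat,0,0] - 1" using gu ph v uh unfolding f_def by auto
      show "[2::nat,0,0] ! f v \<le> (\<Sum>u\<in>nbhd (VG \<times> VH) (lex_edge EG EH) v. f u)"
      proof (cases "f v = 0")
        case False
        then obtain k where "f v = Suc k" by (cases "f v") auto
        moreover have "f v \<le> 2" using gu ph v uh unfolding f_def by auto
        ultimately have "[2::nat,0,0] ! f v = 0" by (cases k) auto
        thus ?thesis by simp
      next
        case True
        have uG: "u \<in> VG" and hH: "h \<in> VH" using v uh by auto
        have eq: "(\<Sum>p\<in>nbhd (VG \<times> VH) (lex_edge EG EH) v. f p)
          = (\<Sum>x\<in>nbhd VG EG u. \<Sum>y\<in>VH. f (x,y)) + (\<Sum>y\<in>nbhd VH EH h. f (u,y))"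
          unfolding uh by (rule sum_nbhd_lex[OF assms(1,2) uG])
        have eq2: "(\<Sum>x\<in>nbhd VG EG u. \<Sum>y\<in>VH. f (x,y)) = (\<Sum>x\<in>nbhd VG EG u. g x)"
          by (intro sum.cong) (auto simp: nbhd_def row)
        show ?thesis
        proof (cases "g u = 3")
          case g3: True
          have "\<phi> h = 0" using True g3 uG hH unfolding f_def uh by simp
          hence "2 \<le> (\<Sum>y\<in>nbhd VH EH h. \<phi> y)" using \<phi>d hH unfolding w_dominating_def by force
          also have "(\<Sum>y\<in>nbhd VH EH h. \<phi> y) = (\<Sum>y\<in>nbhd VH EH h. f (u,y))"
            using uG g3 by (intro sum.cong) (auto simp: nbhd_def f_def)
          finally show ?thesis using True eq by simp
        next
          case False
          hence "g u \<in> {0,1,2}" using gu by auto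
          hence "[2::nat,2,2,0] ! g u = 2" by auto
          hence "2 \<le> (\<Sum>x\<in>nbhd VG EG u. g x)" using gd uG unfolding w_dominating_def by metis
          thus ?thesis using True eq eq2 by simp
        qed
      qed
    qed
    have "(\<Sum>v\<in>VG \<times> VH. f v) = b"
      unfolding sum_prod_split b by (intro sum.cong) (auto simp: row)
    thus ?thesis using fd unfolding S1_def by blast
  qed
  have down: "\<exists>b\<in>S2. b \<le> a" if aS: "a \<in> S1" for a
  proof -
    obtain f where fd: "w_dominating (VG \<times> VH) (lex_edge EG EH) [2,0,0] f"
      and a: "a = (\<Sum>v\<in>VG \<times> VH. f v)"
      using aS unfolding S1_def by blast
    define s where "s = (\<lambda>x. \<Sum>y\<in>VH. f (x,y))"
    define g where "g = (\<lambda>x. min (s x) (3::nat))"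
    have f0: "f p = 0" if "p \<notin> VG \<times> VH" for p using fd that unfolding w_dominating_def by blast
    have f2: "f p \<le> 2" if "p \<in> VG \<times> VH" for p
    proof -
      have "f p \<le> length [2::nat,0,0] - 1" using fd that unfolding w_dominating_def by blast
      thus ?thesis by simp
    qed
    have fit: "2 \<le> (\<Sum>q\<in>nbhd (VG \<times> VH) (lex_edge EG EH) p. f q)" if "p \<in> VG \<times> VH" "f p = 0" for p
      using fd that unfolding w_dominating_def by force
    have gd: "w_dominating VG EG [2,2,2,0] g"
      unfolding w_dominating_def
    proof (intro conjI ballI allI impI)
      fix v assume "v \<notin> VG" thus "g v = 0" unfolding g_def s_def using f0 by simp
    next
      fix v assume "v \<in> VG" show "g v \<le> length [2::nat,2,2,0] - 1" unfolding g_def by simp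
    next
      fix u assume uG: "u \<in> VG"
      show "[2::nat,2,2,0] ! g u \<le> (\<Sum>x\<in>nbhd VG EG u. g x)"
      proof (cases "g u = 3")
        case True thus ?thesis by simp
      next
        case False
        hence su: "s u \<le> 2" unfolding g_def by auto
        show ?thesis
        proof (rule ccontr)
          assume "\<not> ?thesis"
          moreover have "g u \<in> {0,1,2}" using False unfolding g_def by auto
          hence "[2::nat,2,2,0] ! g u = 2" by auto
          ultimately have lt: "(\<Sum>x\<in>nbhd VG EG u. g x) \<le> 1" by simp
          have fN: "finite (nbhd VG EG u)" using fG unfolding nbhd_def by auto
          have "g x = s x" if "x \<in> nbhd VG EG u" for x
          proof -
            have "g x \<le> 1" using member_le_sum[OF that _ fN, of g] lt by simp
            thus ?thesis unfolding g_def by auto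
          qed
          hence tle: "(\<Sum>x\<in>nbhd VG EG u. s x) \<le> 1" using lt by (metis (no_types, lifting) sum.cong)
          have key: "1 \<le> (\<Sum>y\<in>nbhd VH EH h. f (u,y)) + (\<Sum>x\<in>nbhd VG EG u. s x) - 1
                   \<and> 2 \<le> (\<Sum>y\<in>nbhd VH EH h. f (u,y)) + (\<Sum>x\<in>nbhd VG EG u. s x)"
            if "h \<in> VH" "f (u,h) = 0" for h
            using fit[of "(u,h)"] that uG sum_nbhd_lex[OF assms(1,2) uG, where h=h and f=f]
            unfolding s_def by auto
          show False
          proof (cases "(\<Sum>x\<in>nbhd VG EG u. s x) = 0")
            case True
            define \<phi> where "\<phi> = (\<lambda>y. if y \<in> VH then f (u,y) else 0)"
            have "w_dominating VH EH [2,0,0] \<phi>"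
              unfolding w_dominating_def
            proof (intro conjI ballI allI impI)
              fix v assume "v \<notin> VH" thus "\<phi> v = 0" unfolding \<phi>_def by simp
            next
              fix v assume "v \<in> VH" thus "\<phi> v \<le> length [2::nat,0,0] - 1"
                unfolding \<phi>_def using f2[of "(u,v)"] uG by (simp add: numeral_2_eq_2)
            next
              fix h assume hH: "h \<in> VH"
              have sc: "(\<Sum>y\<in>nbhd VH EH h. \<phi> y) = (\<Sum>y\<in>nbhd VH EH h. f (u,y))"
                by (intro sum.cong) (auto simp: nbhd_def \<phi>_def)
              show "[2::nat,0,0] ! \<phi> h \<le> (\<Sum>y\<in>nbhd VH EH h. \<phi> y)"
              proof (cases "\<phi> h = 0")
                case True
                thus ?thesis using key[OF hH] hH \<open>(\<Sum>x\<in>nbhd VG EG u. s x) = 0\<close> sc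
                  unfolding \<phi>_def by simp
              next
                case False
                then obtain k where "\<phi> h = Suc k" by (cases "\<phi> h") auto
                moreover have "\<phi> h \<le> 2" unfolding \<phi>_def using f2 uG hH by simp
                ultimately have "[2::nat,0,0] ! \<phi> h = 0" by (cases k) auto
                thus ?thesis by simp
              qed
            qed
            note \<phi>ok = this
            have \<phi>s: "s u = (\<Sum>y\<in>VH. \<phi> y)" unfolding s_def \<phi>_def by simp
            have "s u \<in> SH" unfolding SH_def
              by (rule CollectI, rule exI[of _ \<phi>], rule conjI[OF \<phi>s \<phi>ok])
            hence "Inf SH \<le> s u" by (rule cInf_lower) simp
            thus False using IH su by simp
          next
            case False
            hence t1: "(\<Sum>x\<in>nbhd VG EG u. s x) = 1" using tle by simp
            define D where "D = {y \<in> VH. 0 < f (u,y)}"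
            have "dominating_set VH EH D"
              unfolding dominating_set_def
            proof (intro conjI ballI)
              show "D \<subseteq> VH" unfolding D_def by auto
            next
              fix h assume hh: "h \<in> VH - D"
              hence "1 \<le> (\<Sum>y\<in>nbhd VH EH h. f (u,y))" using key[of h] t1 unfolding D_def by auto
              hence "\<exists>y\<in>nbhd VH EH h. f (u,y) \<noteq> 0"
              proof (rule contrapos_pp)
                assume "\<not> (\<exists>y\<in>nbhd VH EH h. f (u,y) \<noteq> 0)"
                hence "(\<Sum>y\<in>nbhd VH EH h. f (u,y)) = 0" by (intro sum.neutral) blast
                thus "\<not> 1 \<le> (\<Sum>y\<in>nbhd VH EH h. f (u,y))" by simp
              qed
              then show "\<exists>y\<in>D. EH h y" unfolding D_def nbhd_def by auto
            qed
            hence "card D \<in> {card D | D. dominating_set VH EH D}" by blast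
            hence "Inf {card D | D. dominating_set VH EH D} \<le> card D" by (rule cInf_lower) simp
            hence "3 \<le> card D" using DH by simp
            moreover have "card D \<le> s u"
            proof -
              have "card D = (\<Sum>y\<in>D. 1)" by simp
              also have "\<dots> \<le> (\<Sum>y\<in>D. f (u,y))" by (intro sum_mono) (auto simp: D_def)
              also have "\<dots> \<le> s u" unfolding s_def using fH by (intro sum_mono2) (auto simp: D_def)
              finally show ?thesis .
            qed
            ultimately show False using su by simp
          qed
        qed
      qed
    qed
    have "(\<Sum>v\<in>VG. g v) \<le> (\<Sum>v\<in>VG. s v)" unfolding g_def by (intro sum_mono) simp
    also have "\<dots> = a" unfolding a sum_prod_split s_def ..
    finally have "(\<Sum>v\<in>VG. g v) \<le> a" .
    moreover have "(\<Sum>v\<in>VG. g v) \<in> S2" unfolding S2_def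
      by (rule CollectI, rule exI[of _ g], rule conjI[OF refl gd])
    ultimately show ?thesis by blast
  qed
  have i2: "Inf S2 \<in> S2" using S2ne by (rule Inf_nat_def1)
  then obtain a where a: "a \<in> S1" "a \<le> Inf S2" using up by blast
  have i1: "Inf S1 \<in> S1" using a(1) Inf_nat_def1 by blast
  then obtain b where b: "b \<in> S2" "b \<le> Inf S1" using down by blast
  have "Inf S1 \<le> Inf S2" using a cInf_lower[of a S1] by simp
  moreover have "Inf S2 \<le> Inf S1" using b cInf_lower[of b S2] by simp
  ultimately have "Inf S1 = Inf S2" by simp
  thus ?thesis unfolding italian_domination_number_def gamma_w_def S1_def S2_def .
qed

end
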